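(* Let $(L,\delta_L^* )$ be an iterative $q$-difference field and $(M,\delta_M^* )$ an iterative $q$-difference module over $L$. Set $L_0=\bigcap_{j\notin n\mathbb N}\mathrm{Ker}(\delta_L^{(j)})$ and $M_0=\bigcap_{j\notin n\mathbb N}\mathrm{Ker}(\delta_M^{(j)})$. Then $(M_0,(\partial_M^{(k)}:=\delta_M^{(nk)})_{k\in\mathbb N})$ is an iterative differential module over the iterative differential field $(L_0,(\partial^{(k)}:=\delta_L^{(nk)})_{k\in\mathbb N})$.
   Context: Let $C$ be an algebraically closed field and $q\in C$ a primitive $n$-th root of unity, $n\ge2$; $F=C(t)$ with $\sigma_q(f(t))=f(qt)$; $\binom{r}{k}_q$ is the value at $q$ of the Gaussian polynomial $\prod_{i=1}^{k}\frac{1-x^{r-i+1}}{1-x^{i}}$. An iterative $q$-difference field is a field $L\supseteq F$ with an automorphism $\sigma_q$ extending that of $F$ and maps $\delta_L^{(k)}$ with $\delta_L^{(0)}=\mathrm{id}$, $\delta_L^{(1)}=\frac{\sigma_q-\mathrm{id}}{(q-1)t}$, additivity, $\delta_L^{(k)}(ab)=\sum_{i+j=k}\sigma_q^i(\delta_L^{(j)}(a))\delta_L^{(i)}(b)$, $\delta_L^{(i)}\circ\delta_L^{(j)}=\binom{i+j}{i}_q\delta_L^{(i+j)}$. An iterative $q$-difference module over $L$ is a finite-dimensional $L$-vector space $M$ with maps $\delta_M^{(k)}$, $\delta_M^{(0)}=\mathrm{id}$, $(q-1)t\delta_M^{(1)}+\mathrm{id}$ bijective, additive, $\delta_M^{(k)}(am)=\sum_{i+j=k}\sigma_q^i(\delta_L^{(j)}(a))\delta_M^{(i)}(m)$,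 $\delta_M^{(i)}\circ\delta_M^{(j)}=\binom{i+j}{i}_q\delta_M^{(i+j)}$. An iterative differential field is a field $K$ with maps $\partial^{(k)}:K\to K$ ($k\in\mathbb N$) such that $\partial^{(0)}=\mathrm{id}$, each $\partial^{(k)}$ is additive, $\partial^{(k)}(ab)=\sum_{i+j=k}\partial^{(i)}(a)\partial^{(j)}(b)$, and $\partial^{(i)}\circ\partial^{(j)}=\binom{i+j}{i}\partial^{(i+j)}$ (ordinary binomial coefficient). An iterative differential module over it is a finite-dimensional $K$-vector space $N$ with maps $\partial_N^{(k)}$ such that $\partial_N^{(0)}=\mathrm{id}$, each $\partial_N^{(k)}$ is additive, $\partial_N^{(k)}(am)=\sum_{i+j=k}\partial^{(i)}(a)\partial_N^{(j)}(m)$, and $\partial_N^{(i)}\circ\partial_N^{(j)}=\binom{i+j}{i}\partial_N^{(i+j)}$. *)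

theory Defs
  imports "HOL-Computational_Algebra.Polynomial"
begin

text \<open>The Gaussian polynomial: prod_{i=1}^k (1 - x^(r-i+1)) / (1 - x^i), an integer
  polynomial (the division is exact).\<close>
definition gauss_poly :: "nat \<Rightarrow> nat \<Rightarrow> int poly" where
  "gauss_poly r k =
     (\<Prod>i\<in>{1..k}. 1 - monom 1 (r + 1 - i)) div (\<Prod>i\<in>{1..k}. 1 - monom 1 i)"

definition qbinom :: "'a::comm_ring_1 \<Rightarrow> nat \<Rightarrow> nat \<Rightarrow> 'a" where
  "qbinom x r k = poly (map_poly of_int (gauss_poly r k)) x"

definition primitive_root :: "'c::field \<Rightarrow> nat \<Rightarrow> bool" where
  "primitive_root q n \<longleftrightarrow> q ^ n = 1 \<and> (\<forall>m. 0 < m \<and> m < n \<longrightarrow> q ^ m \<noteq> 1)"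

definition alg_closed_type :: "'c::field itself \<Rightarrow> bool" where
  "alg_closed_type _ \<longleftrightarrow> (\<forall>p :: 'c poly. 0 < degree p \<longrightarrow> (\<exists>x. poly p x = 0))"

definition field_embedding :: "('c::field \<Rightarrow> 'L::field) \<Rightarrow> bool" where
  "field_embedding \<iota> \<longleftrightarrow> inj \<iota> \<and> \<iota> 1 = 1 \<and>
     (\<forall>a b. \<iota> (a + b) = \<iota> a + \<iota> b) \<and> (\<forall>a b. \<iota> (a * b) = \<iota> a * \<iota> b)"

text \<open>L contains F = C(t): the image of C under \<iota> together with an element t of L
  transcendental over \<iota>(C) (so that the subfield generated is a copy of C(t)).\<close>
definition contains_rational_function_field :: "('c::field \<Rightarrow> 'L::field) \<Rightarrow> 'L \<Rightarrow> bool" where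
  "contains_rational_function_field \<iota> t \<longleftrightarrow> field_embedding \<iota> \<and>
     (\<forall>p :: 'c poly. p \<noteq> 0 \<longrightarrow> poly (map_poly \<iota> p) t \<noteq> 0)"

definition iter_qdiff_field ::
  "('c::field \<Rightarrow> 'L::field) \<Rightarrow> 'c \<Rightarrow> 'L \<Rightarrow> ('L \<Rightarrow> 'L) \<Rightarrow> (nat \<Rightarrow> 'L \<Rightarrow> 'L) \<Rightarrow> bool" where
  "iter_qdiff_field \<iota> q t \<sigma> \<delta> \<longleftrightarrow>
     \<comment> \<open>\<sigma> is a field automorphism of L extending \<sigma>_q on F = C(t), i.e. f(t) \<mapsto> f(qt)\<close>
     bij \<sigma> \<and> \<sigma> 1 = 1 \<and> (\<forall>a b. \<sigma> (a + b) = \<sigma> a + \<sigma> b) \<and> (\<forall>a b. \<sigma> (a * b) = \<sigma> a * \<sigma> b) \<and>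
     (\<forall>c. \<sigma> (\<iota> c) = \<iota> c) \<and> \<sigma> t = \<iota> q * t \<and>
     \<delta> 0 = id \<and>
     (\<forall>a. \<delta> 1 a = (\<sigma> a - a) / ((\<iota> q - 1) * t)) \<and>
     (\<forall>k a b. \<delta> k (a + b) = \<delta> k a + \<delta> k b) \<and>
     (\<forall>k a b. \<delta> k (a * b) = (\<Sum>i\<le>k. (\<sigma> ^^ i) (\<delta> (k - i) a) * \<delta> i b)) \<and>
     (\<forall>i j a. \<delta> i (\<delta> j a) = \<iota> (qbinom q (i + j) i) * \<delta> (i + j) a)"

definition iter_qdiff_module ::
  "('c::field \<Rightarrow> 'L::field) \<Rightarrow> 'c \<Rightarrow> 'L \<Rightarrow> ('L \<Rightarrow> 'L) \<Rightarrow> (nat \<Rightarrow> 'L \<Rightarrow> 'L) \<Rightarrow>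
   ('L \<Rightarrow> 'm::ab_group_add \<Rightarrow> 'm) \<Rightarrow> (nat \<Rightarrow> 'm \<Rightarrow> 'm) \<Rightarrow> bool" where
  "iter_qdiff_module \<iota> q t \<sigma> \<delta> scal \<delta>M \<longleftrightarrow>
     \<comment> \<open>M is a finite-dimensional L-vector space\<close>
     vector_space scal \<and> (\<exists>B. finite B \<and> module.span scal B = UNIV) \<and>
     \<delta>M 0 = id \<and>
     bij (\<lambda>m. scal ((\<iota> q - 1) * t) (\<delta>M 1 m) + m) \<and>
     (\<forall>k m m'. \<delta>M k (m + m') = \<delta>M k m + \<delta>M k m') \<and>
     (\<forall>k a m. \<delta>M k (scal a m) = (\<Sum>i\<le>k. scal ((\<sigma> ^^ i) (\<delta> (k - i) a)) (\<delta>M i m))) \<and>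
     (\<forall>i j m. \<delta>M i (\<delta>M j m) = scal (\<iota> (qbinom q (i + j) i)) (\<delta>M (i + j) m))"

definition iter_diff_field :: "'L::field set \<Rightarrow> (nat \<Rightarrow> 'L \<Rightarrow> 'L) \<Rightarrow> bool" where
  "iter_diff_field K D \<longleftrightarrow>
     0 \<in> K \<and> 1 \<in> K \<and> (\<forall>a\<in>K. \<forall>b\<in>K. a + b \<in> K \<and> a * b \<in> K) \<and>
     (\<forall>a\<in>K. - a \<in> K \<and> inverse a \<in> K) \<and>
     (\<forall>k. \<forall>a\<in>K. D k a \<in> K) \<and>
     (\<forall>a\<in>K. D 0 a = a) \<and>
     (\<forall>k. \<forall>a\<in>K. \<forall>b\<in>K. D k (a + b) = D k a + D k b) \<and>
     (\<forall>k. \<forall>a\<in>K. \<forall>b\<in>K. D k (a * b) = (\<Sum>i\<le>k. D i a * D (k - i) b)) \<and>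
     (\<forall>i j. \<forall>a\<in>K. D i (D j a) = of_nat ((i + j) choose i) * D (i + j) a)"

definition iter_diff_module ::
  "'L::field set \<Rightarrow> (nat \<Rightarrow> 'L \<Rightarrow> 'L) \<Rightarrow> ('L \<Rightarrow> 'm::ab_group_add \<Rightarrow> 'm) \<Rightarrow> 'm set \<Rightarrow>
   (nat \<Rightarrow> 'm \<Rightarrow> 'm) \<Rightarrow> bool" where
  "iter_diff_module K D scal N DN \<longleftrightarrow>
     0 \<in> N \<and> (\<forall>m\<in>N. \<forall>m'\<in>N. m + m' \<in> N) \<and> (\<forall>a\<in>K. \<forall>m\<in>N. scal a m \<in> N) \<and>
     (\<exists>B. finite B \<and> B \<subseteq> N \<and>
        (\<forall>m\<in>N. \<exists>f. (\<forall>b\<in>B. f b \<in> K) \<and> m = (\<Sum>b\<in>B. scal (f b) b))) \<and>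
     (\<forall>k. \<forall>m\<in>N. DN k m \<in> N) \<and>
     (\<forall>m\<in>N. DN 0 m = m) \<and>
     (\<forall>k. \<forall>m\<in>N. \<forall>m'\<in>N. DN k (m + m') = DN k m + DN k m') \<and>
     (\<forall>k. \<forall>a\<in>K. \<forall>m\<in>N. DN k (scal a m) = (\<Sum>i\<le>k. scal (D i a) (DN (k - i) m))) \<and>
     (\<forall>i j. \<forall>m\<in>N. DN i (DN j m) = scal (of_nat ((i + j) choose i)) (DN (i + j) m))"

end

theory Submission imports Defs begin

fun G :: "nat \<Rightarrow> nat \<Rightarrow> int poly" where
  "G r 0 = 1"
| "G 0 (Suc k) = 0"
| "G (Suc r) (Suc k) = G r k + monom 1 (Suc k) * G r (Suc k)"

definition PP :: "nat \<Rightarrow> int poly" where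
  "PP k = (\<Prod>i\<in>{1..k}. 1 - monom 1 i)"
definition NN :: "nat \<Rightarrow> nat \<Rightarrow> int poly" where
  "NN r k = (\<Prod>i\<in>{1..k}. 1 - monom 1 (r + 1 - i))"

lemma NN_zero: "r < k \<Longrightarrow> NN r k = 0"
  unfolding NN_def
  by (rule prod_zero) (auto intro!: bexI[of _ "Suc r"] simp: monom_0 one_pCons)

lemma NN_Suc: "NN r (Suc k) = NN r k * (1 - monom 1 (r - k))"
  unfolding NN_def by simp

lemma NN_Suc_Suc: "NN (Suc r) (Suc k) = (1 - monom 1 (Suc r)) * NN r k"
proof -
  have "NN (Suc r) (Suc k) = (1 - monom 1 (Suc r)) * (\<Prod>i\<in>{Suc 1..Suc k}. 1 - monom 1 (Suc r + 1 - i))"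
    unfolding NN_def by (subst prod.atLeast_Suc_atMost) auto
  also have "(\<Prod>i\<in>{Suc 1..Suc k}. 1 - monom 1 (Suc r + 1 - i)) = NN r k"
    unfolding NN_def by (subst prod.shift_bounds_cl_Suc_ivl) simp
  finally show ?thesis .
qed

lemma GP: "G r k * PP k = NN r k"
proof (induction r arbitrary: k)
  case 0
  then show ?case
    by (cases k) (auto simp: PP_def NN_def intro!: prod_zero[symmetric] bexI[of _ 1] simp: monom_0 one_pCons)
next
  case (Suc r)
  show ?case
  proof (cases k)
    case 0 then show ?thesis by (simp add: PP_def NN_def)
  next
    case (Suc k')
    have PS: "PP (Suc k') = PP k' * (1 - monom 1 (Suc k'))" unfolding PP_def by simp
    have "G (Suc r) (Suc k') * PP (Suc k') =
       (G r k' * PP k') * (1 - monom 1 (Suc k')) + monom 1 (Suc k') * (G r (Suc k') * PP (Suc k'))"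
      by (simp add: PS algebra_simps)
    also have "\<dots> = NN r k' * (1 - monom 1 (Suc k')) + monom 1 (Suc k') * NN r (Suc k')"
      using Suc.IH by simp
    also have "\<dots> = (1 - monom 1 (Suc r)) * NN r k'"
    proof (cases "k' \<le> r")
      case True
      have "monom (1::int) (Suc k') * monom 1 (r - k') = monom 1 (Suc r)"
        using True by (simp add: mult_monom)
      then show ?thesis by (simp add: NN_Suc algebra_simps)
    next
      case False then show ?thesis by (simp add: NN_zero NN_Suc)
    qed
    finally show ?thesis using Suc by (simp add: NN_Suc_Suc)
  qed
qed

lemma PP_nz: "PP k \<noteq> 0"
proof -
  have "1 - monom (1::int) i \<noteq> 0" if "i \<ge> 1" for i
  proof
    assume "1 - monom (1::int) i = 0"
    then have "coeff (1 - monom (1::int) i) 0 = 0" by simp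
    with that show False by (simp add: coeff_monom)
  qed
  then show ?thesis unfolding PP_def by (subst prod_zero_iff) auto
qed

lemma gauss_G: "gauss_poly r k = G r k"
proof -
  have "gauss_poly r k = NN r k div PP k" unfolding gauss_poly_def NN_def PP_def by simp
  also have "\<dots> = G r k" by (simp add: GP[symmetric] PP_nz)
  finally show ?thesis .
qed

lemma mp_add: "map_poly (of_int :: int \<Rightarrow> 'a::comm_ring_1) (p + q) = map_poly of_int p + map_poly of_int q"
  by (intro poly_eqI) (simp add: coeff_map_poly)

lemma mp_mult: "map_poly (of_int :: int \<Rightarrow> 'a::comm_ring_1) (p * q) = map_poly of_int p * map_poly of_int q"
proof (induction p)
  case 0 then show ?case by simp
next
  case (pCons a p)
  then show ?case
    by (simp add: mp_add map_poly_smult map_poly_pCons)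
qed

lemma mp_1: "map_poly (of_int :: int \<Rightarrow> 'a::comm_ring_1) 1 = 1" by simp

lemma mp_diff: "map_poly (of_int :: int \<Rightarrow> 'a::comm_ring_1) (p - q) = map_poly of_int p - map_poly of_int q"
  by (intro poly_eqI) (simp add: coeff_map_poly)

lemma mp_prod: "map_poly (of_int :: int \<Rightarrow> 'a::comm_ring_1) (prod f A) = (\<Prod>i\<in>A. map_poly of_int (f i))"
  by (induction A rule: infinite_finite_induct) (simp_all add: mp_mult)

lemma qbinom_G: "qbinom x r k = poly (map_poly of_int (G r k)) x"
  unfolding qbinom_def gauss_G ..

lemma qb_0 [simp]: "qbinom x r 0 = 1"
  by (simp add: qbinom_G)
lemma qb_0S [simp]: "qbinom x 0 (Suc k) = 0"
  by (simp add: qbinom_G)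
lemma qb_SS: "qbinom x (Suc r) (Suc k) = qbinom x r k + x ^ Suc k * qbinom x r (Suc k)"
  by (simp add: qbinom_G mp_add mp_mult map_poly_monom poly_monom)

lemma qb_prod: "qbinom (x::'a::comm_ring_1) r k * (\<Prod>i\<in>{1..k}. 1 - x ^ i) = (\<Prod>i\<in>{1..k}. 1 - x ^ (r + 1 - i))"
proof -
  have "poly (map_poly (of_int :: int \<Rightarrow> 'a) (G r k * PP k)) x = poly (map_poly of_int (NN r k)) x"
    by (simp add: GP)
  then show ?thesis
    by (simp add: qbinom_G mp_mult PP_def NN_def mp_prod mp_diff map_poly_monom poly_monom poly_prod)
qed

lemma qb_gt: "r < k \<Longrightarrow> qbinom x r k = 0"
proof (induction r arbitrary: k)
  case 0 then show ?case by (cases k) auto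
next
  case (Suc r) then show ?case by (cases k) (auto simp: qb_SS)
qed

lemma qb_diag: "qbinom x r r = 1"
  by (induction r) (auto simp: qb_SS qb_gt)


lemma qb_zero_n:
  fixes q :: "'c::field"
  assumes pr: "primitive_root q n" and s: "0 < s" "s < n"
  shows "qbinom q n s = 0"
proof -
  have "qbinom q n s * (\<Prod>i\<in>{1..s}. 1 - q ^ i) = (\<Prod>i\<in>{1..s}. 1 - q ^ (n + 1 - i))"
    by (rule qb_prod)
  also have "\<dots> = 0"
    using pr s unfolding primitive_root_def by (intro prod_zero) (auto intro!: bexI[of _ 1])
  finally have *: "qbinom q n s * (\<Prod>i\<in>{1..s}. 1 - q ^ i) = 0" .
  have "(\<Prod>i\<in>{1..s}. 1 - q ^ i) \<noteq> 0"
    using pr s unfolding primitive_root_def by (subst prod_zero_iff) auto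
  with * show ?thesis by simp
qed

lemma qb_lucas:
  fixes q :: "'c::field"
  assumes pr: "primitive_root q n" and n: "n \<ge> 1"
  shows "\<forall>a r b s. N = n*a + r \<longrightarrow> r < n \<longrightarrow> s < n \<longrightarrow>
           qbinom q N (n*b+s) = of_nat (a choose b) * qbinom q r s"
proof (induction N)
  case 0
  show ?case
  proof (intro allI impI)
    fix a r b s assume h: "0 = n*a + r" "r < n" "s < n"
    then have a: "a = 0" "r = 0" using n by auto
    show "qbinom q 0 (n*b+s) = of_nat (a choose b) * qbinom q r s"
    proof (cases "n*b+s")
      case 0 then show ?thesis using a n by auto
    next
      case (Suc k)
      then show ?thesis using a n by (cases b) (auto simp: qb_gt)
    qed
  qed
next
  case (Suc N)
  have qn: "q ^ (n*b) = 1" "q ^ (b*n) = 1" for b using pr unfolding primitive_root_def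
    by (simp_all add: power_mult mult.commute[of b n])
  show ?case
  proof (intro allI impI)
    fix a r b s assume h: "Suc N = n*a + r" "r < n" "s < n"
    show "qbinom q (Suc N) (n*b+s) = of_nat (a choose b) * qbinom q r s"
    proof (cases "n*b+s")
      case 0 then show ?thesis using n by auto
    next
      case (Suc K)
      have LHS: "qbinom q (Suc N) (n*b+s) = qbinom q N K + q ^ (n*b+s) * qbinom q N (n*b+s)"
        using Suc by (simp add: qb_SS)
      show ?thesis
      proof (cases "r \<ge> 1")
        case r: True
        have N: "N = n*a + (r - 1)" using h r by auto
        show ?thesis
        proof (cases "s \<ge> 1")
          case s: True
          have K: "K = n*b + (s-1)" using Suc s by auto
          have "qbinom q (Suc N) (n*b+s) = of_nat (a choose b) * (qbinom q (r-1) (s-1) + q^s * qbinom q (r-1) s)"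
            unfolding LHS using Suc.IH[rule_format, OF N, of "s-1" b] Suc.IH[rule_format, OF N, of s b] h K
            by (simp add: power_add qn algebra_simps)
          also have "qbinom q (r-1) (s-1) + q^s * qbinom q (r-1) s = qbinom q r s"
            using qb_SS[of q "r-1" "s-1"] r s by simp
          finally show ?thesis .
        next
          case s: False
          then have s0: "s = 0" by simp
          then obtain b' where b: "b = Suc b'" using Suc by (cases b) auto
          have K: "K = n*b' + (n-1)" using Suc s0 b n by simp
          have "qbinom q (Suc N) (n*b+s) = of_nat (a choose b') * qbinom q (r-1) (n-1) + of_nat (a choose b)"
            unfolding LHS using Suc.IH[rule_format, OF N, of "n-1" b'] Suc.IH[rule_format, OF N, of 0 b] h K s0 n
            by (simp add: qn)
          also have "qbinom q (r-1) (n-1) = 0" using h r by (intro qb_gt) auto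
          finally show ?thesis using s0 by simp
        qed
      next
        case r: False
        then have r0: "r = 0" by simp
        then obtain a' where a: "a = Suc a'" using h by (cases a) auto
        have N: "N = n*a' + (n-1)" using h r0 a n by simp
        show ?thesis
        proof (cases "s \<ge> 1")
          case s: True
          have K: "K = n*b + (s-1)" using Suc s by auto
          have "qbinom q (Suc N) (n*b+s) = of_nat (a' choose b) * (qbinom q (n-1) (s-1) + q^s * qbinom q (n-1) s)"
            unfolding LHS using Suc.IH[rule_format, OF N, of "s-1" b] Suc.IH[rule_format, OF N, of s b] h K n
            by (simp add: power_add qn algebra_simps)
          also have "qbinom q (n-1) (s-1) + q^s * qbinom q (n-1) s = qbinom q n s"
            using qb_SS[of q "n-1" "s-1"] n s by simp
          also have "qbinom q n s = 0" using qb_zero_n[OF pr, of s] s h by simp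
          finally show ?thesis using r0 s by (simp add: qb_gt)
        next
          case s: False
          then have s0: "s = 0" by simp
          then obtain b' where b: "b = Suc b'" using Suc by (cases b) auto
          have K: "K = n*b' + (n-1)" using Suc s0 b n by simp
          have "qbinom q (Suc N) (n*b+s) = of_nat (a' choose b') * qbinom q (n-1) (n-1) + of_nat (a' choose b) * qbinom q (n-1) 0"
            unfolding LHS using Suc.IH[rule_format, OF N, of "n-1" b'] Suc.IH[rule_format, OF N, of 0 b] h K s0 n
            by (simp add: qn)
          also have "\<dots> = of_nat (a choose b)" using a b by (simp add: qb_diag)
          finally show ?thesis using s0 r0 by simp
        qed
      qed
    qed
  qed
qed

lemma qb_lucas0:
  fixes q :: "'c::field"
  assumes pr: "primitive_root q n" and n: "n \<ge> 1"
  shows "qbinom q (n*a) (n*b) = of_nat (a choose b)"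
proof -
  have "\<forall>a' r b' s. n*a = n*a' + r \<longrightarrow> r < n \<longrightarrow> s < n \<longrightarrow>
           qbinom q (n*a) (n*b'+s) = of_nat (a' choose b') * qbinom q r s"
    by (rule qb_lucas[OF pr n])
  then have "qbinom q (n*a) (n*b+0) = of_nat (a choose b) * qbinom q 0 0"
    using n by (elim allE[of _ a] allE[of _ 0] allE[of _ b] allE[of _ 0]) auto
  then show ?thesis by simp
qed


lemma sum_mult_n:
  fixes g :: "nat \<Rightarrow> 'a::comm_monoid_add"
  assumes n: "n > 0" and z: "\<And>i. \<not> n dvd i \<Longrightarrow> g i = 0"
  shows "(\<Sum>i\<le>n*k. g i) = (\<Sum>i\<le>k. g (n*i))"
proof -
  have "(\<Sum>i\<le>k. g (n*i)) = sum g ((*) n ` {..k})"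
    using n by (subst sum.reindex) (auto simp: inj_on_def)
  also have "\<dots> = (\<Sum>i\<le>n*k. g i)"
  proof (rule sum.mono_neutral_left)
    show "(*) n ` {..k} \<subseteq> {..n*k}" by auto
    show "\<forall>i\<in>{..n * k} - (*) n ` {..k}. g i = 0"
    proof
      fix i assume i: "i \<in> {..n * k} - (*) n ` {..k}"
      show "g i = 0"
      proof (cases "n dvd i")
        case True
        then obtain c where c: "i = n*c" by blast
        then have "c \<le> k" using i n by auto
        then show ?thesis using i c by auto
      qed (rule z)
    qed
  qed auto
  finally show ?thesis by simp
qed

lemma sum_rev_atMost:
  fixes g :: "nat \<Rightarrow> 'a::comm_monoid_add"
  shows "(\<Sum>i\<le>k. g i) = (\<Sum>i\<le>k. g (k - i))"
  by (rule sum.reindex_bij_witness[where i="\<lambda>i. k-i" and j="\<lambda>i. k-i"]) auto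

lemma add_hom_sum:
  fixes f :: "'a::ab_group_add \<Rightarrow> 'b::ab_group_add"
  assumes "\<And>x y. f (x + y) = f x + f y"
  shows "f (sum g A) = (\<Sum>a\<in>A. f (g a))"
proof -
  have f0: "f 0 = 0" using assms[of 0 0] by simp
  show ?thesis by (induction A rule: infinite_finite_induct) (simp_all add: f0 assms)
qed



lemma ndvd_diff: "(n::nat) dvd i \<Longrightarrow> \<not> n dvd j \<Longrightarrow> i \<le> j \<Longrightarrow> \<not> n dvd (j - i)"
  by (metis dvd_add le_add_diff_inverse2)

theorem proposition3p6:
  fixes \<iota> :: "'c::field \<Rightarrow> 'L::field" and q :: 'c and n :: nat and t :: 'L
    and \<sigma> :: "'L \<Rightarrow> 'L" and \<delta>L :: "nat \<Rightarrow> 'L \<Rightarrow> 'L"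
    and scal :: "'L \<Rightarrow> 'm::ab_group_add \<Rightarrow> 'm" and \<delta>M :: "nat \<Rightarrow> 'm \<Rightarrow> 'm"
  assumes "alg_closed_type TYPE('c)"
    and "n \<ge> 2" and "primitive_root q n"
    and "contains_rational_function_field \<iota> t"
    and "iter_qdiff_field \<iota> q t \<sigma> \<delta>L"
    and "iter_qdiff_module \<iota> q t \<sigma> \<delta>L scal \<delta>M"
  shows "iter_diff_field {a. \<forall>j. \<not> n dvd j \<longrightarrow> \<delta>L j a = 0} (\<lambda>k. \<delta>L (n * k))
       \<and> iter_diff_module {a. \<forall>j. \<not> n dvd j \<longrightarrow> \<delta>L j a = 0} (\<lambda>k. \<delta>L (n * k)) scal
           {m. \<forall>j. \<not> n dvd j \<longrightarrow> \<delta>M j m = 0} (\<lambda>k. \<delta>M (n * k))"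
proof -
  note F = assms(5)[unfolded iter_qdiff_field_def]
  note Mo = assms(6)[unfolded iter_qdiff_module_def]
  note E = assms(4)[unfolded contains_rational_function_field_def field_embedding_def]
  have pr: "primitive_root q n" by fact
  have n2: "n \<ge> 2" by fact
  then have n0: "n > 0" and n1: "n \<ge> 1" by auto
  have sadd: "\<And>a b. \<sigma> (a+b) = \<sigma> a + \<sigma> b" using F by blast
  have s1: "\<sigma> 1 = 1" using F by blast
  have d0: "\<delta>L 0 = id" using F by blast
  have d1: "\<And>a. \<delta>L 1 a = (\<sigma> a - a) / ((\<iota> q - 1) * t)" using F by blast
  have dadd: "\<And>k a b. \<delta>L k (a+b) = \<delta>L k a + \<delta>L k b" using F by blast
  have dmul: "\<And>k a b. \<delta>L k (a*b) = (\<Sum>i\<le>k. (\<sigma>^^i) (\<delta>L (k-i) a) * \<delta>L i b)" using F by blast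
  have dcomp: "\<And>i j a. \<delta>L i (\<delta>L j a) = \<iota> (qbinom q (i+j) i) * \<delta>L (i+j) a" using F by blast
  have vs: "vector_space scal" using Mo by blast
  interpret V: vector_space scal by (rule vs)
  have fin: "\<exists>B. finite B \<and> V.span B = UNIV" using Mo by blast
  have M0: "\<delta>M 0 = id" using Mo by blast
  have Madd: "\<And>k m m'. \<delta>M k (m + m') = \<delta>M k m + \<delta>M k m'" using Mo by blast
  have Mscal: "\<And>k a m. \<delta>M k (scal a m) = (\<Sum>i\<le>k. scal ((\<sigma>^^i) (\<delta>L (k-i) a)) (\<delta>M i m))" using Mo by blast
  have Mcomp: "\<And>i j m. \<delta>M i (\<delta>M j m) = scal (\<iota> (qbinom q (i+j) i)) (\<delta>M (i+j) m)" using Mo by blast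
  have iinj: "inj \<iota>" and i1: "\<iota> 1 = 1" and iadd: "\<And>a b. \<iota> (a+b) = \<iota> a + \<iota> b"
    and itr: "\<And>p. p \<noteq> 0 \<Longrightarrow> poly (map_poly \<iota> p) t \<noteq> 0" using E by blast+
  have i0: "\<iota> 0 = 0" using iadd[of 0 0] by (metis add.right_neutral add_left_cancel)
  have inat: "\<iota> (of_nat m) = of_nat m" for m
    by (induction m) (simp_all add: i0 i1 iadd)
  have qne: "\<iota> q \<noteq> 1"
  proof
    assume "\<iota> q = 1"
    then have "q = 1" using iinj i1 by (metis injD)
    with pr n2 show False unfolding primitive_root_def by (metis One_nat_def less_2_cases_iff
          le_less_trans not_less power_one_right zero_less_one)
  qed
  have tne: "t \<noteq> 0"
    using itr[of "[:0,1:]"] by (simp add: map_poly_pCons i0 i1)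
  have den: "(\<iota> q - 1) * t \<noteq> 0" using qne tne by simp
  have s0: "\<sigma> 0 = 0" using sadd[of 0 0] by (metis add.right_neutral add_left_cancel)
  have spow0: "(\<sigma>^^i) 0 = 0" for i by (induction i) (simp_all add: s0)
  have spow1: "(\<sigma>^^i) 1 = 1" for i by (induction i) (simp_all add: s1)
  have dz: "\<delta>L k 0 = 0" for k using dadd[of k 0 0] by (metis add.right_neutral add_left_cancel)
  have dneg: "\<delta>L k (-a) = - \<delta>L k a" for k a
    using dadd[of k a "-a"] dz[of k] by (metis add.commute add_eq_0_iff2 neg_equal_iff_equal minus_minus)
  have Mz: "\<delta>M k 0 = 0" for k using Madd[of k 0 0] by simp
  define K where "K = {a. \<forall>j. \<not> n dvd j \<longrightarrow> \<delta>L j a = 0}"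
  define NM where "NM = {m. \<forall>j. \<not> n dvd j \<longrightarrow> \<delta>M j m = 0}"
  have n_not_1: "\<not> n dvd 1" using n2 by auto
  have sfix: "\<sigma> a = a" if a: "a \<in> K" for a
  proof -
    have "\<delta>L 1 a = 0" using a n_not_1 unfolding K_def by blast
    then have "(\<sigma> a - a) / ((\<iota> q - 1) * t) = 0" using d1 by simp
    then show ?thesis using den by simp
  qed
  have spowfix: "(\<sigma>^^i) a = a" if "a \<in> K" for a i
    by (induction i) (simp_all add: sfix that)
  have d_one: "\<delta>L j 1 = 0" if "j \<ge> 1" for j
    using that
  proof (induction j rule: less_induct)
    case (less j)
    have "\<delta>L j 1 = \<delta>L j (1*1)" by simp
    also have "\<dots> = (\<Sum>i\<le>j. (\<sigma>^^i) (\<delta>L (j-i) 1) * \<delta>L i 1)" by (rule dmul)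
    also have "\<dots> = (\<Sum>i\<in>{0,j}. (\<sigma>^^i) (\<delta>L (j-i) 1) * \<delta>L i 1)"
      by (rule sum.mono_neutral_right) (use less in auto)
    also have "\<dots> = \<delta>L j 1 + \<delta>L j 1" using less by (simp add: d0 spow1)
    finally show ?case by (metis add.right_neutral add_left_cancel)
  qed
  have K0: "0 \<in> K" unfolding K_def by (simp add: dz)
  have K1: "1 \<in> K" unfolding K_def by (auto intro!: d_one simp: Suc_le_eq intro: Nat.gr0I)
  have Kadd: "a + b \<in> K" if "a \<in> K" "b \<in> K" for a b using that unfolding K_def by (simp add: dadd)
  have Kneg: "- a \<in> K" if "a \<in> K" for a using that unfolding K_def by (simp add: dneg)
  have Kmul: "a * b \<in> K" if a: "a \<in> K" and b: "b \<in> K" for a b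
    unfolding K_def
  proof (intro CollectI allI impI)
    fix j assume j: "\<not> n dvd j"
    have "\<delta>L j (a*b) = (\<Sum>i\<le>j. (\<sigma>^^i) (\<delta>L (j-i) a) * \<delta>L i b)" by (rule dmul)
    also have "\<dots> = 0"
    proof (rule sum.neutral, rule ballI)
      fix i assume i: "i \<in> {..j}"
      show "(\<sigma>^^i) (\<delta>L (j-i) a) * \<delta>L i b = 0"
      proof (cases "n dvd i")
        case True
        then have "\<not> n dvd (j-i)" using ndvd_diff j i by auto
        then show ?thesis using a unfolding K_def by (simp add: spow0)
      next
        case False then show ?thesis using b unfolding K_def by simp
      qed
    qed
    finally show "\<delta>L j (a*b) = 0" .
  qed
  have Kinv: "inverse a \<in> K" if a: "a \<in> K" for a
  proof (cases "a = 0")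
    case True then show ?thesis using K0 by simp
  next
    case anz: False
    have "\<delta>L j (inverse a) = 0" if "\<not> n dvd j" for j
      using that
    proof (induction j rule: less_induct)
      case (less j)
      have j1: "j \<ge> 1" using less.prems by (cases j) auto
      have "0 = \<delta>L j (a * inverse a)" using anz d_one[OF j1] by simp
      also have "\<dots> = (\<Sum>i\<le>j. (\<sigma>^^i) (\<delta>L (j-i) a) * \<delta>L i (inverse a))" by (rule dmul)
      also have "\<dots> = (\<Sum>i\<in>{j}. (\<sigma>^^i) (\<delta>L (j-i) a) * \<delta>L i (inverse a))"
      proof (rule sum.mono_neutral_right)
        show "\<forall>i\<in>{..j} - {j}. (\<sigma>^^i) (\<delta>L (j-i) a) * \<delta>L i (inverse a) = 0"
        proof
          fix i assume i: "i \<in> {..j} - {j}"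
          show "(\<sigma>^^i) (\<delta>L (j-i) a) * \<delta>L i (inverse a) = 0"
          proof (cases "n dvd (j - i)")
            case True
            then have "\<not> n dvd i" using less.prems i
              by (metis DiffE atMost_iff diff_diff_cancel diff_le_self ndvd_diff)
            then show ?thesis using less.IH i by auto
          next
            case False then show ?thesis using a unfolding K_def by (simp add: spow0)
          qed
        qed
      qed auto
      also have "\<dots> = a * \<delta>L j (inverse a)" using spowfix[OF a] by (simp add: d0)
      finally show ?case using anz by simp
    qed
    then show ?thesis unfolding K_def by blast
  qed
  have KD: "\<delta>L (n*k) a \<in> K" if a: "a \<in> K" for a k
    unfolding K_def
  proof (intro CollectI allI impI)
    fix j assume j: "\<not> n dvd j"
    have "\<not> n dvd (j + n*k)" using j by (simp add: dvd_add_left_iff)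
    then show "\<delta>L j (\<delta>L (n*k) a) = 0" using a unfolding K_def by (simp add: dcomp)
  qed
  have Kprod: "\<delta>L (n*k) (a*b) = (\<Sum>i\<le>k. \<delta>L (n*i) a * \<delta>L (n*(k-i)) b)"
    if a: "a \<in> K" and b: "b \<in> K" for a b k
  proof -
    have "\<delta>L (n*k) (a*b) = (\<Sum>i\<le>n*k. (\<sigma>^^i) (\<delta>L (n*k-i) a) * \<delta>L i b)" by (rule dmul)
    also have "\<dots> = (\<Sum>i\<le>k. (\<sigma>^^(n*i)) (\<delta>L (n*k-n*i) a) * \<delta>L (n*i) b)"
      by (rule sum_mult_n[OF n0]) (use b in \<open>simp add: K_def\<close>)
    also have "\<dots> = (\<Sum>i\<le>k. \<delta>L (n*(k-i)) a * \<delta>L (n*i) b)"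
    proof (rule sum.cong)
      fix i assume "i \<in> {..k}"
      have e: "n*k - n*i = n*(k-i)" by (simp add: diff_mult_distrib2)
      show "(\<sigma>^^(n*i)) (\<delta>L (n*k-n*i) a) * \<delta>L (n*i) b = \<delta>L (n*(k-i)) a * \<delta>L (n*i) b"
        unfolding e by (simp add: spowfix[OF KD[OF a]])
    qed simp
    also have "\<dots> = (\<Sum>i\<le>k. \<delta>L (n*(k-(k-i))) a * \<delta>L (n*(k-i)) b)"
      by (rule sum_rev_atMost)
    also have "\<dots> = (\<Sum>i\<le>k. \<delta>L (n*i) a * \<delta>L (n*(k-i)) b)"
      by (rule sum.cong) auto
    finally show ?thesis .
  qed
  have Kcomp: "\<delta>L (n*i) (\<delta>L (n*j) a) = of_nat ((i+j) choose i) * \<delta>L (n*(i+j)) a" for i j a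
    using dcomp[of "n*i" "n*j" a] qb_lucas0[OF pr n1, of "i+j" i]
    by (simp add: add_mult_distrib2 inat)
  have field: "iter_diff_field K (\<lambda>k. \<delta>L (n * k))"
    unfolding iter_diff_field_def
    using K0 K1 Kadd Kmul Kneg Kinv KD Kprod Kcomp
    by (simp add: d0 dadd)
  have N0: "0 \<in> NM" unfolding NM_def by (simp add: Mz)
  have Nadd: "\<forall>m\<in>NM. \<forall>m'\<in>NM. m + m' \<in> NM" unfolding NM_def by (simp add: Madd)
  have Nscal: "\<forall>a\<in>K. \<forall>m\<in>NM. scal a m \<in> NM"
  proof (intro ballI)
    fix a m assume a: "a \<in> K" and m: "m \<in> NM"
    show "scal a m \<in> NM" unfolding NM_def
    proof (intro CollectI allI impI)
      fix j assume j: "\<not> n dvd j"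
      have "\<delta>M j (scal a m) = (\<Sum>i\<le>j. scal ((\<sigma>^^i) (\<delta>L (j-i) a)) (\<delta>M i m))" by (rule Mscal)
      also have "\<dots> = 0"
      proof (rule sum.neutral, rule ballI)
        fix i assume i: "i \<in> {..j}"
        show "scal ((\<sigma>^^i) (\<delta>L (j-i) a)) (\<delta>M i m) = 0"
        proof (cases "n dvd i")
          case True
          then have "\<not> n dvd (j-i)" using ndvd_diff j i by auto
          then show ?thesis using a unfolding K_def by (simp add: spow0)
        next
          case False then show ?thesis using m unfolding NM_def by simp
        qed
      qed
      finally show "\<delta>M j (scal a m) = 0" .
    qed
  qed
  have ND: "\<forall>k. \<forall>m\<in>NM. \<delta>M (n*k) m \<in> NM"
  proof (intro allI ballI)
    fix k m assume m: "m \<in> NM"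
    show "\<delta>M (n*k) m \<in> NM" unfolding NM_def
    proof (intro CollectI allI impI)
      fix j assume j: "\<not> n dvd j"
      have "\<not> n dvd (j + n*k)" using j by (simp add: dvd_add_left_iff)
      then show "\<delta>M j (\<delta>M (n*k) m) = 0" using m unfolding NM_def by (simp add: Mcomp)
    qed
  qed
  have Nsc: "\<forall>k. \<forall>a\<in>K. \<forall>m\<in>NM. \<delta>M (n*k) (scal a m) = (\<Sum>i\<le>k. scal (\<delta>L (n*i) a) (\<delta>M (n*(k-i)) m))"
  proof (intro allI ballI)
    fix k a m assume a: "a \<in> K" and m: "m \<in> NM"
    have "\<delta>M (n*k) (scal a m) = (\<Sum>i\<le>n*k. scal ((\<sigma>^^i) (\<delta>L (n*k-i) a)) (\<delta>M i m))" by (rule Mscal)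
    also have "\<dots> = (\<Sum>i\<le>k. scal ((\<sigma>^^(n*i)) (\<delta>L (n*k-n*i) a)) (\<delta>M (n*i) m))"
      by (rule sum_mult_n[OF n0]) (use m in \<open>simp add: NM_def\<close>)
    also have "\<dots> = (\<Sum>i\<le>k. scal (\<delta>L (n*(k-i)) a) (\<delta>M (n*i) m))"
    proof (rule sum.cong)
      fix i assume "i \<in> {..k}"
      have e: "n*k - n*i = n*(k-i)" by (simp add: diff_mult_distrib2)
      show "scal ((\<sigma>^^(n*i)) (\<delta>L (n*k-n*i) a)) (\<delta>M (n*i) m) = scal (\<delta>L (n*(k-i)) a) (\<delta>M (n*i) m)"
        unfolding e by (simp add: spowfix[OF KD[OF a]])
    qed simp
    also have "\<dots> = (\<Sum>i\<le>k. scal (\<delta>L (n*(k-(k-i))) a) (\<delta>M (n*(k-i)) m))"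
      by (rule sum_rev_atMost)
    also have "\<dots> = (\<Sum>i\<le>k. scal (\<delta>L (n*i) a) (\<delta>M (n*(k-i)) m))"
      by (rule sum.cong) auto
    finally show "\<delta>M (n*k) (scal a m) = (\<Sum>i\<le>k. scal (\<delta>L (n*i) a) (\<delta>M (n*(k-i)) m))" .
  qed
  have Ncomp: "\<forall>i j. \<forall>m\<in>NM. \<delta>M (n*i) (\<delta>M (n*j) m) = scal (of_nat ((i+j) choose i)) (\<delta>M (n*(i+j)) m)"
  proof (intro allI ballI)
    fix i j m
    show "\<delta>M (n*i) (\<delta>M (n*j) m) = scal (of_nat ((i+j) choose i)) (\<delta>M (n*(i+j)) m)"
      using Mcomp[of "n*i" "n*j" m] qb_lucas0[OF pr n1, of "i+j" i]
      by (simp add: add_mult_distrib2 inat)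
  qed
  have basis: "\<exists>B. finite B \<and> B \<subseteq> NM \<and>
        (\<forall>m\<in>NM. \<exists>f. (\<forall>b\<in>B. f b \<in> K) \<and> m = (\<Sum>b\<in>B. scal (f b) b))"
  proof -
    obtain B0 where B0: "finite B0" "V.span B0 = UNIV" using fin by blast
    have bnd: "finite B \<and> card B \<le> card B0" if "V.independent B" for B
      using V.independent_span_bound[OF B0(1) that] B0(2) by auto
    have "\<exists>B. (B \<subseteq> NM \<and> V.independent B) \<and>
          (\<forall>B'. B' \<subseteq> NM \<and> V.independent B' \<longrightarrow> card B' \<le> card B)"
      by (rule ex_has_greatest_nat[of "\<lambda>B. B \<subseteq> NM \<and> V.independent B" "{}" card "Suc (card B0)"])
         (use bnd V.independent_empty in \<open>auto simp: le_imp_less_Suc\<close>)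
    then obtain B where B: "B \<subseteq> NM" "V.independent B"
      and Bmax: "\<And>B'. B' \<subseteq> NM \<Longrightarrow> V.independent B' \<Longrightarrow> card B' \<le> card B" by blast
    have Bfin: "finite B" using bnd B by blast
    have span: "m \<in> V.span B" if m: "m \<in> NM" for m
    proof (rule ccontr)
      assume nm: "m \<notin> V.span B"
      then have mB: "m \<notin> B" using V.span_superset by blast
      have "V.independent (insert m B)" using V.independent_insertI[OF nm] B by blast
      moreover have "insert m B \<subseteq> NM" using m B by blast
      ultimately have "card (insert m B) \<le> card B" using Bmax by blast
      with Bfin mB show False by simp
    qed
    show ?thesis
    proof (rule exI[of _ B], intro conjI ballI)
      show "finite B" by (rule Bfin)
      show "B \<subseteq> NM" by (rule B)
      fix m assume m: "m \<in> NM"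
      obtain u where u: "m = (\<Sum>v\<in>B. scal (u v) v)"
        using span[OF m] V.span_finite[OF Bfin] by blast
      have uK: "\<forall>v\<in>B. \<delta>L j (u v) = 0" if "\<not> n dvd j" for j
        using that
      proof (induction j rule: less_induct)
        case (less j)
        have inner: "\<delta>M j (scal (u v) v) = scal (\<delta>L j (u v)) v" if v: "v \<in> B" for v
        proof -
          have "\<delta>M j (scal (u v) v) = (\<Sum>i\<le>j. scal ((\<sigma>^^i) (\<delta>L (j-i) (u v))) (\<delta>M i v))" by (rule Mscal)
          also have "\<dots> = (\<Sum>i\<in>{0}. scal ((\<sigma>^^i) (\<delta>L (j-i) (u v))) (\<delta>M i v))"
          proof (rule sum.mono_neutral_right)
            show "\<forall>i\<in>{..j}-{0}. scal ((\<sigma>^^i) (\<delta>L (j-i) (u v))) (\<delta>M i v) = 0"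
            proof
              fix i assume i: "i \<in> {..j}-{0}"
              show "scal ((\<sigma>^^i) (\<delta>L (j-i) (u v))) (\<delta>M i v) = 0"
              proof (cases "n dvd i")
                case True
                have "\<not> n dvd (j-i)" using True less.prems i ndvd_diff by auto
                moreover have "j - i < j" using i less.prems by auto
                ultimately have "\<delta>L (j-i) (u v) = 0" using less.IH v by blast
                then show ?thesis by (simp add: spow0)
              next
                case False
                then have "\<delta>M i v = 0" using v B unfolding NM_def by blast
                then show ?thesis by simp
              qed
            qed
          qed auto
          also have "\<dots> = scal (\<delta>L j (u v)) v" by (simp add: d0 M0)
          finally show ?thesis .
        qed
        have "0 = \<delta>M j m" using m less.prems unfolding NM_def by simp
        also have "\<dots> = (\<Sum>v\<in>B. \<delta>M j (scal (u v) v))" unfolding u by (rule add_hom_sum) (rule Madd)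
        also have "\<dots> = (\<Sum>v\<in>B. scal (\<delta>L j (u v)) v)" using inner by simp
        finally have "(\<Sum>v\<in>B. scal (\<delta>L j (u v)) v) = 0" by simp
        then show ?case using V.independentD[of B B "\<lambda>v. \<delta>L j (u v)"] B Bfin by blast
      qed
      show "\<exists>f. (\<forall>b\<in>B. f b \<in> K) \<and> m = (\<Sum>b\<in>B. scal (f b) b)"
        using uK u unfolding K_def by blast
    qed
  qed
  have module: "iter_diff_module K (\<lambda>k. \<delta>L (n * k)) scal NM (\<lambda>k. \<delta>M (n * k))"
    unfolding iter_diff_module_def
    using N0 Nadd Nscal basis ND Nsc Ncomp
    by (simp add: d0 M0 Madd)
  show ?thesis using field module unfolding K_def NM_def by blast
qed

end
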